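(* Let $a,b\in\{1,2,3\}$ with $a\neq b$, and let $P\in R$ not depend on $x_{a4}$ and satisfy $DP=D_1P=D_2P=D_3P=D_4P=0$. Then there exists $Q\in R$ not depending on $x_{a4}$ with $\partial_{b4}Q=P$ and $DQ=D_1Q=D_2Q=D_3Q=D_4Q=0$.
   Context: $R=\mathbb C[x_1,x_2,x_3,x_4,x_{12},x_{13},x_{14},x_{23},x_{24},x_{34}]$ (i.e. $\mathrm{Sym}(\mathbb C^4)\otimes\mathrm{Sym}(\Lambda^2\mathbb C^4)$), $\partial_i=\partial/\partial x_i$, $\partial_{ij}=\partial/\partial x_{ij}$, $D=\partial_{12}\partial_{34}-\partial_{13}\partial_{24}+\partial_{14}\partial_{23}$, $D_1=\partial_{23}\partial_4-\partial_{24}\partial_3+\partial_{34}\partial_2$, $D_2=\partial_{13}\partial_4-\partial_{14}\partial_3+\partial_{34}\partial_1$, $D_3=\partial_{12}\partial_4-\partial_{14}\partial_2+\partial_{24}\partial_1$, $D_4=\partial_{12}\partial_3-\partial_{13}\partial_2+\partial_{23}\partial_1$. *)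

theory Defs
  imports Complex_Main "HOL-Library.Poly_Mapping"
begin

text \<open>The ten variables of R = Sym(C^4) (x) Sym(Lambda^2 C^4).\<close>
datatype var = X1 | X2 | X3 | X4 | X12 | X13 | X14 | X23 | X24 | X34

type_synonym poly10 = "(var \<Rightarrow>\<^sub>0 nat) \<Rightarrow>\<^sub>0 complex"

lift_definition pd :: "var \<Rightarrow> poly10 \<Rightarrow> poly10" is
  "\<lambda>v p m. of_nat (Poly_Mapping.lookup m v + 1) * p (m + Poly_Mapping.single v 1)"
proof -
  fix v and p :: "(var \<Rightarrow>\<^sub>0 nat) \<Rightarrow> complex"
  assume fin: "finite {m. p m \<noteq> 0}"
  have "{m. of_nat (Poly_Mapping.lookup m v + 1) * p (m + Poly_Mapping.single v 1) \<noteq> (0::complex)}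
        \<subseteq> (\<lambda>m. m - Poly_Mapping.single v 1) ` {m. p m \<noteq> 0}"
  proof
    fix m assume "m \<in> {m. of_nat (Poly_Mapping.lookup m v + 1) * p (m + Poly_Mapping.single v 1) \<noteq> (0::complex)}"
    then have "p (m + Poly_Mapping.single v 1) \<noteq> 0" by simp
    moreover have "m = (m + Poly_Mapping.single v 1) - Poly_Mapping.single v 1"
      by simp
    ultimately show "m \<in> (\<lambda>m. m - Poly_Mapping.single v 1) ` {m. p m \<noteq> 0}" by blast
  qed
  then show "finite {m. of_nat (Poly_Mapping.lookup m v + 1) * p (m + Poly_Mapping.single v 1) \<noteq> (0::complex)}"
    using fin finite_subset by blast
qed

definition indep_of :: "var \<Rightarrow> poly10 \<Rightarrow> bool" where
  "indep_of v P \<longleftrightarrow> (\<forall>m \<in> Poly_Mapping.keys P. Poly_Mapping.lookup m v = 0)"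

definition opD :: "poly10 \<Rightarrow> poly10" where
  "opD P = pd X12 (pd X34 P) - pd X13 (pd X24 P) + pd X14 (pd X23 P)"
definition opD1 :: "poly10 \<Rightarrow> poly10" where
  "opD1 P = pd X23 (pd X4 P) - pd X24 (pd X3 P) + pd X34 (pd X2 P)"
definition opD2 :: "poly10 \<Rightarrow> poly10" where
  "opD2 P = pd X13 (pd X4 P) - pd X14 (pd X3 P) + pd X34 (pd X1 P)"
definition opD3 :: "poly10 \<Rightarrow> poly10" where
  "opD3 P = pd X12 (pd X4 P) - pd X14 (pd X2 P) + pd X24 (pd X1 P)"
definition opD4 :: "poly10 \<Rightarrow> poly10" where
  "opD4 P = pd X12 (pd X3 P) - pd X13 (pd X2 P) + pd X23 (pd X1 P)"

fun x_4 :: "nat \<Rightarrow> var" where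
  "x_4 (Suc 0) = X14"
| "x_4 (Suc (Suc 0)) = X24"
| "x_4 _ = X34"

end

theory Submission
  imports Defs "HOL-Library.FuncSet"
begin

instance var :: finite
proof
  have "(UNIV :: var set) = {X1, X2, X3, X4, X12, X13, X14, X23, X24, X34}"
    by (auto intro: var.exhaust)
  then show "finite (UNIV :: var set)" by (metis finite.emptyI finite_insert)
qed

type_synonym mon = "var \<Rightarrow>\<^sub>0 nat"

definition sv :: "var \<Rightarrow> mon" where "sv v = Poly_Mapping.single v 1"

lemma lookup_sv [simp]: "Poly_Mapping.lookup (sv v) w = (if v = w then 1 else 0)"
  unfolding sv_def by (simp add: lookup_single)

lemma lookup_pd: "Poly_Mapping.lookup (pd v P) m = of_nat (Poly_Mapping.lookup m v + 1) * Poly_Mapping.lookup P (m + sv v)"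
  by (simp add: pd.rep_eq sv_def)

definition mfactn :: "mon \<Rightarrow> nat" where
  "mfactn m = (\<Prod>v\<in>UNIV. fact (Poly_Mapping.lookup m v))"

definition mfact :: "mon \<Rightarrow> complex" where
  "mfact m = of_nat (mfactn m)"

lemma mfactn_nz: "mfactn m \<noteq> 0"
  unfolding mfactn_def by (simp add: prod_zero_iff)

lemma mfact_nz: "mfact m \<noteq> 0"
  unfolding mfact_def using mfactn_nz by simp

lemma mfactn_add: "mfactn (m + sv v) = (Poly_Mapping.lookup m v + 1) * mfactn m"
proof -
  have "mfactn (m + sv v) = (\<Prod>w\<in>UNIV. fact (Poly_Mapping.lookup m w + (if v = w then 1 else 0)))"
    unfolding mfactn_def by (simp add: lookup_add)
  also have "\<dots> = fact (Poly_Mapping.lookup m v + 1) * (\<Prod>w\<in>UNIV-{v}. fact (Poly_Mapping.lookup m w))"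
    by (subst prod.remove[of _ v]) (auto intro!: prod.cong)
  also have "\<dots> = (Poly_Mapping.lookup m v + 1) * (fact (Poly_Mapping.lookup m v) * (\<Prod>w\<in>UNIV-{v}. fact (Poly_Mapping.lookup m w)))"
    by (simp add: algebra_simps)
  also have "\<dots> = (Poly_Mapping.lookup m v + 1) * mfactn m"
    unfolding mfactn_def by (subst (2) prod.remove[of _ v]) auto
  finally show ?thesis .
qed

lemma mfact_add: "mfact (m + sv v) = of_nat (Poly_Mapping.lookup m v + 1) * mfact m"
  unfolding mfact_def mfactn_add by (simp add: algebra_simps)

definition fP :: "poly10 \<Rightarrow> mon \<Rightarrow> complex" where
  "fP P m = mfact m * Poly_Mapping.lookup P m"

lemma fP_pd1: "mfact m * Poly_Mapping.lookup (pd v P) m = fP P (m + sv v)"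
  by (simp add: lookup_pd fP_def mfact_add[simplified] ac_simps)

lemma fP_pd2: "u \<noteq> v \<Longrightarrow> mfact m * Poly_Mapping.lookup (pd u (pd v P)) m = fP P (m + sv u + sv v)"
proof -
  assume "u \<noteq> v"
  then have "Poly_Mapping.lookup (m + sv u) v = Poly_Mapping.lookup m v"
    by (simp add: lookup_add lookup_single)
  moreover have "mfact (m + sv u + sv v) = of_nat (Poly_Mapping.lookup (m + sv u) v + 1) * (of_nat (Poly_Mapping.lookup m u + 1) * mfact m)"
    by (simp only: mfact_add)
  ultimately show ?thesis
    by (simp add: lookup_pd fP_def add.assoc)
qed

locale roles =
  fixes y z a1 a2 a3 b1 b2 c d1 d2 :: var
  assumes dist: "distinct [y, z, a1, a2, a3, b1, b2, c, d1, d2]"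
begin

lemma neqs [simp]: "y \<noteq> z" "y \<noteq> a1" "y \<noteq> a2" "y \<noteq> a3" "y \<noteq> b1" "y \<noteq> b2" "y \<noteq> c" "y \<noteq> d1" "y \<noteq> d2" "z \<noteq> y" "z \<noteq> a1" "z \<noteq> a2" "z \<noteq> a3" "z \<noteq> b1" "z \<noteq> b2" "z \<noteq> c" "z \<noteq> d1" "z \<noteq> d2" "a1 \<noteq> y" "a1 \<noteq> z" "a1 \<noteq> a2" "a1 \<noteq> a3" "a1 \<noteq> b1" "a1 \<noteq> b2" "a1 \<noteq> c" "a1 \<noteq> d1" "a1 \<noteq> d2" "a2 \<noteq> y" "a2 \<noteq> z" "a2 \<noteq> a1" "a2 \<noteq> a3" "a2 \<noteq> b1" "a2 \<noteq> b2" "a2 \<noteq> c" "a2 \<noteq> d1" "a2 \<noteq> d2" "a3 \<noteq> y" "a3 \<noteq> z" "a3 \<noteq> a1" "a3 \<noteq> a2" "a3 \<noteq> b1" "a3 \<noteq> b2" "a3 \<noteq> c" "a3 \<noteq> d1" "a3 \<noteq> d2" "b1 \<noteq> y" "b1 \<noteq> z" "b1 \<noteq> a1" "b1 \<noteq> a2" "b1 \<noteq> a3" "b1 \<noteq> b2" "b1 \<noteq> c" "b1 \<noteq> d1" "b1 \<noteq> d2" "b2 \<noteq> y" "b2 \<noteq> z" "b2 \<noteq> a1" "b2 \<noteq> a2" "b2 \<noteq> a3" "b2 \<noteq> b1" "b2 \<noteq> c" "b2 \<noteq> d1" "b2 \<noteq> d2" "c \<noteq> y" "c \<noteq> z" "c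 \<noteq> a1" "c \<noteq> a2" "c \<noteq> a3" "c \<noteq> b1" "c \<noteq> b2" "c \<noteq> d1" "c \<noteq> d2" "d1 \<noteq> y" "d1 \<noteq> z" "d1 \<noteq> a1" "d1 \<noteq> a2" "d1 \<noteq> a3" "d1 \<noteq> b1" "d1 \<noteq> b2" "d1 \<noteq> c" "d1 \<noteq> d2" "d2 \<noteq> y" "d2 \<noteq> z" "d2 \<noteq> a1" "d2 \<noteq> a2" "d2 \<noteq> a3" "d2 \<noteq> b1" "d2 \<noteq> b2" "d2 \<noteq> c" "d2 \<noteq> d1"
  using dist by auto

lemma univ: "(UNIV :: var set) = {y, z, a1, a2, a3, b1, b2, c, d1, d2}"
proof -
  have U: "(UNIV :: var set) = {X1, X2, X3, X4, X12, X13, X14, X23, X24, X34}"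
    by (auto intro: var.exhaust)
  have "card (UNIV :: var set) = 10" unfolding U by simp
  moreover have "card {y, z, a1, a2, a3, b1, b2, c, d1, d2} = 10"
    using dist by simp
  ultimately show ?thesis
    by (metis card_subset_eq finite subset_UNIV)
qed

definition deg :: "mon \<Rightarrow> nat" where
  "deg m = (\<Sum>v\<in>UNIV. Poly_Mapping.lookup m v)"

lemma deg_add: "deg (m + n) = deg m + deg n"
  unfolding deg_def by (simp add: lookup_add sum.distrib)

lemma deg_sv: "deg (sv v) = 1"
  unfolding deg_def by simp

definition mono6 :: "nat \<Rightarrow> nat \<Rightarrow> nat \<Rightarrow> nat \<Rightarrow> nat \<Rightarrow> nat \<Rightarrow> mon" where
  "mono6 p q r s t u = Poly_Mapping.single y p + Poly_Mapping.single a1 q + Poly_Mapping.single b1 r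
     + Poly_Mapping.single b2 s + Poly_Mapping.single d1 t + Poly_Mapping.single d2 u"

lemma mono6_add: "mono6 p q r s t u + mono6 p' q' r' s' t' u' = mono6 (p+p') (q+q') (r+r') (s+s') (t+t') (u+u')"
  unfolding mono6_def by (simp add: single_add ac_simps)

lemma lookup_mono6 [simp]:
  "Poly_Mapping.lookup (mono6 p q r s t u) y = p"
  "Poly_Mapping.lookup (mono6 p q r s t u) a1 = q"
  "Poly_Mapping.lookup (mono6 p q r s t u) b1 = r"
  "Poly_Mapping.lookup (mono6 p q r s t u) b2 = s"
  "Poly_Mapping.lookup (mono6 p q r s t u) d1 = t"
  "Poly_Mapping.lookup (mono6 p q r s t u) d2 = u"
  unfolding mono6_def by (simp_all add: lookup_add lookup_single)

lemma mono6_eq_iff: "mono6 p q r s t u = mono6 p' q' r' s' t' u' \<longleftrightarrow> p = p' \<and> q = q' \<and> r = r' \<and> s = s' \<and> t = t' \<and> u = u'"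
  by (metis lookup_mono6)

abbreviation lk :: "mon \<Rightarrow> var \<Rightarrow> nat" where "lk m v \<equiv> Poly_Mapping.lookup m v"

definition base :: "mon \<Rightarrow> mon" where
  "base m = mono6 (2 * lk m y + lk m a1 + lk m b1 + lk m b2 + lk m d1 + lk m d2)
     (lk m a1 + lk m a2 + lk m a3) (lk m b1) (lk m b2) (lk m d1 + lk m a2) (lk m d2 + lk m a3)"

definition sgnc :: "mon \<Rightarrow> complex" where
  "sgnc m = (-1) ^ lk m a3 * 0 ^ lk m z"

definition BT :: poly10 where
  "BT = Poly_Mapping.single (mono6 0 0 0 1 1 0) 1 + Poly_Mapping.single (mono6 0 0 1 0 0 1) 1"

definition psi :: "mon \<Rightarrow> poly10" where
  "psi m = Poly_Mapping.single (base m) (sgnc m) * BT ^ lk m c"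

lemma base_add: "base (m + n) = base m + base n"
  unfolding base_def by (simp add: lookup_add mono6_add algebra_simps)

lemma psi_add: "psi (m + n) = psi m * psi n"
proof -
  have "psi m * psi n = (Poly_Mapping.single (base m) (sgnc m) * Poly_Mapping.single (base n) (sgnc n)) * (BT ^ lk m c * BT ^ lk n c)"
    unfolding psi_def by (simp add: ac_simps)
  also have "\<dots> = psi (m + n)"
    unfolding psi_def mult_single base_add by (simp add: sgnc_def lookup_add power_add ac_simps)
  finally show ?thesis by simp
qed

lemma psi_sv [simp]:
  "psi (sv y) = Poly_Mapping.single (mono6 2 0 0 0 0 0) 1"
  "psi (sv z) = 0"
  "psi (sv a1) = Poly_Mapping.single (mono6 1 1 0 0 0 0) 1"
  "psi (sv a2) = Poly_Mapping.single (mono6 0 1 0 0 1 0) 1"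
  "psi (sv a3) = Poly_Mapping.single (mono6 0 1 0 0 0 1) (-1)"
  "psi (sv b1) = Poly_Mapping.single (mono6 1 0 1 0 0 0) 1"
  "psi (sv b2) = Poly_Mapping.single (mono6 1 0 0 1 0 0) 1"
  "psi (sv c) = BT"
  "psi (sv d1) = Poly_Mapping.single (mono6 1 0 0 0 1 0) 1"
  "psi (sv d2) = Poly_Mapping.single (mono6 1 0 0 0 0 1) 1"
  unfolding psi_def base_def sgnc_def by (simp_all add: mono6_def)

end

lemma LMarith:
  fixes k e i j f g l h p k' e' i' j' f' g' l' h' p' :: nat
  assumes "2*k+e+f+g+h+p = 2*k'+e'+f'+g'+h'+p'" "e+i+j = e'+i'+j'" "f+l = f'+l'" "g = g'"
    "h+i = h'+i'" "p+j+l = p'+j'+l'"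
    "\<not>(0<e \<and> 0<h)" "\<not>(0<f \<and> 0<p)" "\<not>(0<i \<and> 0<p)" "\<not>(0<e \<and> 0<p)" "\<not>(0<f \<and> 0<j)"
    "\<not>(0<e' \<and> 0<h')" "\<not>(0<f' \<and> 0<p')" "\<not>(0<i' \<and> 0<p')" "\<not>(0<e' \<and> 0<p')" "\<not>(0<f' \<and> 0<j')"
  shows "k=k' \<and> e=e' \<and> i=i' \<and> j=j' \<and> f=f' \<and> g=g' \<and> l=l' \<and> h=h' \<and> p=p'"
proof -
  have P: "p = (p+j+l) - (e+i+j) - (f+l)"
  proof (cases "p = 0")
    case False
    then have "e = 0" "i = 0" "f = 0" using assms(8) assms(9) assms(10) by auto
    then show ?thesis by simp
  qed simp
  have P': "p' = (p'+j'+l') - (e'+i'+j') - (f'+l')"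
  proof (cases "p' = 0")
    case False
    then have "e' = 0" "i' = 0" "f' = 0" using assms(13) assms(14) assms(15) by auto
    then show ?thesis by simp
  qed simp
  have pp: "p = p'" by (metis P P' assms(2) assms(3) assms(6))
  show ?thesis
  proof (cases "p = 0")
    case False
    then have "e = 0" "i = 0" "f = 0" using assms(8) assms(9) assms(10) by auto
    moreover have "e' = 0" "i' = 0" "f' = 0" using False pp assms(13) assms(14) assms(15) by auto
    ultimately show ?thesis using pp assms(1) assms(2) assms(3) assms(4) assms(5) assms(6) by simp
  next
    case True
    then have p0: "p = 0" "p' = 0" using pp by auto
    have e6: "j + l = j' + l'" using assms(6) p0 by simp
    have jj: "j = j'"
    proof (cases "0 < j")
      case True
      then have f0: "f = 0" using assms(11) by auto
      show ?thesis
      proof (cases "0 < j'")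
        case True
        then have "f' = 0" using assms(16) by auto
        then show ?thesis using f0 assms(3) e6 by simp
      next
        case False
        then show ?thesis using f0 assms(3) e6 by simp
      qed
    next
      case False
      show ?thesis
      proof (cases "0 < j'")
        case True
        then have "f' = 0" using assms(16) by auto
        then show ?thesis using False assms(3) e6 by simp
      next
        case False
        then show ?thesis using \<open>\<not> 0 < j\<close> by simp
      qed
    qed
    have ll: "l = l'" using jj e6 by simp
    have ff: "f = f'" using ll assms(3) by simp
    have ei: "e + i = e' + i'" using assms(2) jj by simp
    have hi: "h + i = h' + i'" using assms(5) by simp
    have i1: "i = min (e+i) (h+i)" using assms(7) by auto
    have i2: "i' = min (e'+i') (h'+i')" using assms(12) by auto
    have ii: "i = i'" using i1 i2 ei hi by simp
    have ee: "e = e'" and hh: "h = h'" using ei hi ii by simp_all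
    have kk: "k = k'" using assms(1) ee ff hh assms(4) p0 by simp
    show ?thesis using kk ee ii jj ff assms(4) ll hh pp by simp
  qed
qed

context roles begin

lemma psi_rels:
  "psi (m + sv a1 + sv d1) - psi (m + sv a2 + sv y) + psi (m + sv z + sv b1) = 0"
  "psi (m + sv b1 + sv d2) - psi (m + sv y + sv c) + psi (m + sv d1 + sv b2) = 0"
  "psi (m + sv a2 + sv d2) - psi (m + sv z + sv c) + psi (m + sv d1 + sv a3) = 0"
  "psi (m + sv a1 + sv d2) - psi (m + sv z + sv b2) + psi (m + sv y + sv a3) = 0"
  "psi (m + sv a1 + sv c) - psi (m + sv a2 + sv b2) + psi (m + sv b1 + sv a3) = 0"
  by (simp_all only: psi_add psi_sv; simp add: mult.assoc mult_single mono6_add BT_def single_uminus algebra_simps)+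

lemma X_other:
  "Poly_Mapping.lookup (Poly_Mapping.single (mono6 p q r s t u) \<kappa> * BT ^ l) w \<noteq> 0 \<Longrightarrow>
    w = mono6 p q (r+l) s t (u+l) \<or> lk w b1 < r + l"
proof (induction l arbitrary: p q r s t u)
  case 0
  then show ?case by (simp add: lookup_single when_def split: if_splits)
next
  case (Suc l)
  have "Poly_Mapping.single (mono6 p q r s t u) \<kappa> * BT ^ Suc l =
     Poly_Mapping.single (mono6 p q r (s+1) (t+1) u) \<kappa> * BT ^ l + Poly_Mapping.single (mono6 p q (r+1) s t (u+1)) \<kappa> * BT ^ l"
  proof -
    have "Poly_Mapping.single (mono6 p q r s t u) \<kappa> * BT ^ Suc l =
      (Poly_Mapping.single (mono6 p q r s t u) \<kappa> * Poly_Mapping.single (mono6 0 0 0 1 1 0) 1) * BT ^ l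
      + (Poly_Mapping.single (mono6 p q r s t u) \<kappa> * Poly_Mapping.single (mono6 0 0 1 0 0 1) 1) * BT ^ l"
      by (simp add: BT_def algebra_simps)
    then show ?thesis by (simp add: mult_single mono6_add)
  qed
  with Suc.prems have "Poly_Mapping.lookup (Poly_Mapping.single (mono6 p q r (s+1) (t+1) u) \<kappa> * BT ^ l) w \<noteq> 0 \<or>
     Poly_Mapping.lookup (Poly_Mapping.single (mono6 p q (r+1) s t (u+1)) \<kappa> * BT ^ l) w \<noteq> 0"
    by (auto simp: lookup_add)
  then show ?case
  proof
    assume "Poly_Mapping.lookup (Poly_Mapping.single (mono6 p q r (s+1) (t+1) u) \<kappa> * BT ^ l) w \<noteq> 0"
    from Suc.IH[OF this] show ?thesis by auto
  next
    assume "Poly_Mapping.lookup (Poly_Mapping.single (mono6 p q (r+1) s t (u+1)) \<kappa> * BT ^ l) w \<noteq> 0"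
    from Suc.IH[OF this] show ?thesis by auto
  qed
qed

lemma X_lead:
  "Poly_Mapping.lookup (Poly_Mapping.single (mono6 p q r s t u) \<kappa> * BT ^ l) (mono6 p q (r+l) s t (u+l)) = \<kappa>"
proof (induction l arbitrary: p q r s t u)
  case 0
  then show ?case by simp
next
  case (Suc l)
  have "Poly_Mapping.single (mono6 p q r s t u) \<kappa> * BT ^ Suc l =
     Poly_Mapping.single (mono6 p q r (s+1) (t+1) u) \<kappa> * BT ^ l + Poly_Mapping.single (mono6 p q (r+1) s t (u+1)) \<kappa> * BT ^ l"
  proof -
    have "Poly_Mapping.single (mono6 p q r s t u) \<kappa> * BT ^ Suc l =
      (Poly_Mapping.single (mono6 p q r s t u) \<kappa> * Poly_Mapping.single (mono6 0 0 0 1 1 0) 1) * BT ^ l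
      + (Poly_Mapping.single (mono6 p q r s t u) \<kappa> * Poly_Mapping.single (mono6 0 0 1 0 0 1) 1) * BT ^ l"
      by (simp add: BT_def algebra_simps)
    then show ?thesis by (simp add: mult_single mono6_add)
  qed
  moreover have "Poly_Mapping.lookup (Poly_Mapping.single (mono6 p q r (s+1) (t+1) u) \<kappa> * BT ^ l) (mono6 p q (r + Suc l) s t (u + Suc l)) = 0"
  proof (rule ccontr)
    assume "Poly_Mapping.lookup (Poly_Mapping.single (mono6 p q r (s+1) (t+1) u) \<kappa> * BT ^ l) (mono6 p q (r + Suc l) s t (u + Suc l)) \<noteq> 0"
    from X_other[OF this] show False by (simp add: mono6_eq_iff)
  qed
  moreover have "Poly_Mapping.lookup (Poly_Mapping.single (mono6 p q (r+1) s t (u+1)) \<kappa> * BT ^ l) (mono6 p q (r + Suc l) s t (u + Suc l)) = \<kappa>"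
    using Suc.IH[of p q "r+1" s t "u+1"] by simp
  ultimately show ?case by (simp add: lookup_add)
qed

definition std :: "mon \<Rightarrow> bool" where
  "std m \<longleftrightarrow> lk m z = 0 \<and> \<not>(0 < lk m a1 \<and> 0 < lk m d1) \<and> \<not>(0 < lk m b1 \<and> 0 < lk m d2)
     \<and> \<not>(0 < lk m a2 \<and> 0 < lk m d2) \<and> \<not>(0 < lk m a1 \<and> 0 < lk m d2) \<and> \<not>(0 < lk m b1 \<and> 0 < lk m a3)"

definition LM :: "mon \<Rightarrow> mon" where
  "LM w = mono6 (2 * lk w y + lk w a1 + lk w b1 + lk w b2 + lk w d1 + lk w d2)
     (lk w a1 + lk w a2 + lk w a3) (lk w b1 + lk w c) (lk w b2) (lk w d1 + lk w a2) (lk w d2 + lk w a3 + lk w c)"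

lemma psi_lead: "lk w z = 0 \<Longrightarrow> Poly_Mapping.lookup (psi w) (LM w) = (-1) ^ lk w a3"
  unfolding psi_def LM_def base_def sgnc_def
  using X_lead[of "2 * lk w y + lk w a1 + lk w b1 + lk w b2 + lk w d1 + lk w d2"
     "lk w a1 + lk w a2 + lk w a3" "lk w b1" "lk w b2" "lk w d1 + lk w a2" "lk w d2 + lk w a3"
     "(-1) ^ lk w a3" "lk w c"]
  by (simp add: add.assoc)

lemma psi_other: "Poly_Mapping.lookup (psi w) u \<noteq> 0 \<Longrightarrow> u = LM w \<or> lk u b1 < lk (LM w) b1"
  unfolding psi_def LM_def base_def
  by (drule X_other) (simp add: add.assoc)

lemma LM_inj: "std w \<Longrightarrow> std w' \<Longrightarrow> LM w = LM w' \<Longrightarrow> w = w'"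
proof -
  assume s: "std w" "std w'" and e: "LM w = LM w'"
  from e have eqs: "2 * lk w y + lk w a1 + lk w b1 + lk w b2 + lk w d1 + lk w d2 = 2 * lk w' y + lk w' a1 + lk w' b1 + lk w' b2 + lk w' d1 + lk w' d2"
     "lk w a1 + lk w a2 + lk w a3 = lk w' a1 + lk w' a2 + lk w' a3" "lk w b1 + lk w c = lk w' b1 + lk w' c"
     "lk w b2 = lk w' b2" "lk w d1 + lk w a2 = lk w' d1 + lk w' a2" "lk w d2 + lk w a3 + lk w c = lk w' d2 + lk w' a3 + lk w' c"
    unfolding LM_def mono6_eq_iff by auto
  have A: "lk w y = lk w' y \<and> lk w a1 = lk w' a1 \<and> lk w a2 = lk w' a2 \<and> lk w a3 = lk w' a3 \<and> lk w b1 = lk w' b1 \<and> lk w b2 = lk w' b2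
      \<and> lk w c = lk w' c \<and> lk w d1 = lk w' d1 \<and> lk w d2 = lk w' d2"
    apply (rule LMarith[OF eqs])
    using s unfolding std_def by auto
  have B: "lk w z = lk w' z" using s unfolding std_def by simp
  show "w = w'"
  proof (rule poly_mapping_eqI)
    fix v
    have "v \<in> {y, z, a1, a2, a3, b1, b2, c, d1, d2}" by (simp only: univ[symmetric] UNIV_I)
    then show "lk w v = lk w' v" using A B by (elim insertE) auto
  qed
qed

end

definition lin :: "(mon \<Rightarrow> complex) \<Rightarrow> poly10 \<Rightarrow> complex" where
  "lin F cc = (\<Sum>w\<in>Poly_Mapping.keys cc. Poly_Mapping.lookup cc w * F w)"

lemma lin_super: "finite S \<Longrightarrow> Poly_Mapping.keys cc \<subseteq> S \<Longrightarrow> lin F cc = (\<Sum>w\<in>S. Poly_Mapping.lookup cc w * F w)"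
  unfolding lin_def by (rule sum.mono_neutral_left) (auto simp: in_keys_iff)

lemma lin_add: "lin F (c1 + c2) = lin F c1 + lin F c2"
proof -
  let ?S = "Poly_Mapping.keys c1 \<union> Poly_Mapping.keys c2"
  have "lin F (c1 + c2) = (\<Sum>w\<in>?S. Poly_Mapping.lookup (c1 + c2) w * F w)"
    by (rule lin_super) (auto simp: keys_add)
  also have "\<dots> = (\<Sum>w\<in>?S. Poly_Mapping.lookup c1 w * F w) + (\<Sum>w\<in>?S. Poly_Mapping.lookup c2 w * F w)"
    by (simp add: lookup_add distrib_right sum.distrib)
  also have "\<dots> = lin F c1 + lin F c2"
    by (simp add: lin_super[where S="?S"])
  finally show ?thesis .
qed

lemma lin_diff: "lin F (c1 - c2) = lin F c1 - lin F c2"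
proof -
  let ?S = "Poly_Mapping.keys c1 \<union> Poly_Mapping.keys c2"
  have "lin F (c1 - c2) = (\<Sum>w\<in>?S. Poly_Mapping.lookup (c1 - c2) w * F w)"
    by (rule lin_super) (auto simp: keys_diff)
  also have "\<dots> = (\<Sum>w\<in>?S. Poly_Mapping.lookup c1 w * F w) - (\<Sum>w\<in>?S. Poly_Mapping.lookup c2 w * F w)"
    by (simp add: lookup_minus left_diff_distrib sum_subtractf)
  also have "\<dots> = lin F c1 - lin F c2"
    by (simp add: lin_super[where S="?S"])
  finally show ?thesis .
qed

lemma lin_zero [simp]: "lin F 0 = 0"
  unfolding lin_def by simp

lemma lin_single [simp]: "lin F (Poly_Mapping.single w 1) = F w"
  unfolding lin_def by simp

lemma lin_cong: "(\<And>w. w \<in> Poly_Mapping.keys cc \<Longrightarrow> F w = G w) \<Longrightarrow> lin F cc = lin G cc"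
  unfolding lin_def by simp

context roles begin

lemma indep:
  assumes K: "Poly_Mapping.keys cc \<subseteq> Collect std"
    and Z: "\<And>u. lin (\<lambda>w. Poly_Mapping.lookup (psi w) u) cc = 0"
  shows "cc = 0"
proof (rule ccontr)
  assume "cc \<noteq> 0"
  let ?K = "Poly_Mapping.keys cc"
  have fin: "finite ?K" and ne: "?K \<noteq> {}" using \<open>cc \<noteq> 0\<close> by auto
  let ?M = "Max ((\<lambda>w. lk (LM w) b1) ` ?K)"
  have "?M \<in> (\<lambda>w. lk (LM w) b1) ` ?K" by (rule Max_in) (use fin ne in auto)
  then obtain w0 where w0: "w0 \<in> ?K" "lk (LM w0) b1 = ?M" by (metis (no_types, lifting) imageE)
  have std0: "std w0" using K w0 by auto
  have others: "Poly_Mapping.lookup (psi w) (LM w0) = 0" if "w \<in> ?K - {w0}" for w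
  proof (rule ccontr)
    assume "Poly_Mapping.lookup (psi w) (LM w0) \<noteq> 0"
    from psi_other[OF this] show False
    proof
      assume "LM w0 = LM w"
      then have "w0 = w" using LM_inj std0 K that by auto
      then show False using that by auto
    next
      assume "lk (LM w0) b1 < lk (LM w) b1"
      moreover have "lk (LM w) b1 \<le> ?M" using fin that by auto
      ultimately show False using w0 by simp
    qed
  qed
  have "lin (\<lambda>w. Poly_Mapping.lookup (psi w) (LM w0)) cc =
      Poly_Mapping.lookup cc w0 * Poly_Mapping.lookup (psi w0) (LM w0)
      + (\<Sum>w\<in>?K - {w0}. Poly_Mapping.lookup cc w * Poly_Mapping.lookup (psi w) (LM w0))"
    unfolding lin_def using fin w0 by (simp add: sum.remove)
  also have "\<dots> = Poly_Mapping.lookup cc w0 * (-1) ^ lk w0 a3"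
    using others std0 by (simp add: psi_lead std_def)
  finally have "Poly_Mapping.lookup cc w0 * (-1) ^ lk w0 a3 = 0" using Z by simp
  then have "Poly_Mapping.lookup cc w0 = 0" by simp
  then show False using w0 by (simp add: in_keys_iff)
qed

definition annih :: "(mon \<Rightarrow> complex) \<Rightarrow> bool" where
  "annih f \<longleftrightarrow> (\<forall>m. 0 < lk m z \<longrightarrow> f m = 0)
    \<and> (\<forall>m. f (m + sv a1 + sv d1) - f (m + sv a2 + sv y) + f (m + sv z + sv b1) = 0)
    \<and> (\<forall>m. f (m + sv b1 + sv d2) - f (m + sv y + sv c) + f (m + sv d1 + sv b2) = 0)
    \<and> (\<forall>m. f (m + sv a2 + sv d2) - f (m + sv z + sv c) + f (m + sv d1 + sv a3) = 0)
    \<and> (\<forall>m. f (m + sv a1 + sv d2) - f (m + sv z + sv b2) + f (m + sv y + sv a3) = 0)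
    \<and> (\<forall>m. f (m + sv a1 + sv c) - f (m + sv a2 + sv b2) + f (m + sv b1 + sv a3) = 0)"

definition rep :: "mon \<Rightarrow> poly10 \<Rightarrow> bool" where
  "rep m cc \<longleftrightarrow> Poly_Mapping.keys cc \<subseteq> {w. std w \<and> deg w = deg m}
     \<and> (\<forall>u. lin (\<lambda>w. Poly_Mapping.lookup (psi w) u) cc = Poly_Mapping.lookup (psi m) u)"

lemma rep_unique: "rep m c1 \<Longrightarrow> rep m c2 \<Longrightarrow> c1 = c2"
proof -
  assume r: "rep m c1" "rep m c2"
  have "c1 - c2 = 0"
  proof (rule indep)
    show "Poly_Mapping.keys (c1 - c2) \<subseteq> Collect std"
      using r keys_diff[of c1 c2] unfolding rep_def by auto
    show "lin (\<lambda>w. Poly_Mapping.lookup (psi w) u) (c1 - c2) = 0" for u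
      using r unfolding rep_def by (simp add: lin_diff)
  qed
  then show ?thesis by simp
qed

definition wt :: "mon \<Rightarrow> nat" where
  "wt m = 4 * lk m a1 + 3 * lk m a2 + 2 * lk m a3 + 3 * lk m b1"

lemma wt_add: "wt (m + n) = wt m + wt n"
  unfolding wt_def by (simp add: lookup_add)

lemma wt_sv [simp]:
  "wt (sv y) = 0" "wt (sv z) = 0" "wt (sv a1) = 4" "wt (sv a2) = 3" "wt (sv a3) = 2"
  "wt (sv b1) = 3" "wt (sv b2) = 0" "wt (sv c) = 0" "wt (sv d1) = 0" "wt (sv d2) = 0"
  unfolding wt_def by simp_all

lemma split_mon: "0 < lk m u \<Longrightarrow> 0 < lk m v \<Longrightarrow> u \<noteq> v \<Longrightarrow> m = (m - sv u - sv v) + sv u + sv v"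
  by (rule poly_mapping_eqI) (auto simp: lookup_add lookup_minus)

lemma red_step:
  assumes m: "m = m' + sv u0 + sv v0"
    and psr: "psi (m' + sv u0 + sv v0) = psi (m' + sv u1 + sv v1) - psi (m' + sv u2 + sv v2)"
    and fr: "\<And>f. annih f \<Longrightarrow> f (m' + sv u0 + sv v0) = f (m' + sv u1 + sv v1) - f (m' + sv u2 + sv v2)"
    and IH1: "\<exists>cc. rep (m' + sv u1 + sv v1) cc \<and> (\<forall>f. annih f \<longrightarrow> f (m' + sv u1 + sv v1) = lin f cc)"
    and IH2: "\<exists>cc. rep (m' + sv u2 + sv v2) cc \<and> (\<forall>f. annih f \<longrightarrow> f (m' + sv u2 + sv v2) = lin f cc)"
  shows "\<exists>cc. rep m cc \<and> (\<forall>f. annih f \<longrightarrow> f m = lin f cc)"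
proof -
  obtain c1 where c1: "rep (m' + sv u1 + sv v1) c1" "\<forall>f. annih f \<longrightarrow> f (m' + sv u1 + sv v1) = lin f c1"
    using IH1 by blast
  obtain c2 where c2: "rep (m' + sv u2 + sv v2) c2" "\<forall>f. annih f \<longrightarrow> f (m' + sv u2 + sv v2) = lin f c2"
    using IH2 by blast
  have dg: "deg (m' + sv u1 + sv v1) = deg m" "deg (m' + sv u2 + sv v2) = deg m"
    using m by (simp_all add: deg_add deg_sv)
  have "rep m (c1 - c2)"
    unfolding rep_def
  proof
    show "Poly_Mapping.keys (c1 - c2) \<subseteq> {w. std w \<and> deg w = deg m}"
      using c1(1) c2(1) keys_diff[of c1 c2] dg unfolding rep_def by auto
    show "\<forall>u. lin (\<lambda>w. Poly_Mapping.lookup (psi w) u) (c1 - c2) = Poly_Mapping.lookup (psi m) u"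
      using c1(1) c2(1) m psr unfolding rep_def by (simp add: lin_diff lookup_minus)
  qed
  moreover have "\<forall>f. annih f \<longrightarrow> f m = lin f (c1 - c2)"
    using c1(2) c2(2) fr m by (simp add: lin_diff)
  ultimately show ?thesis by blast
qed

lemma reduction: "\<exists>cc. rep m cc \<and> (\<forall>f. annih f \<longrightarrow> f m = lin f cc)"
proof (induction "wt m" arbitrary: m rule: less_induct)
  case less
  show ?case
  proof (cases "0 < lk m z")
    case True
    have "psi m = 0" unfolding psi_def sgnc_def using True by (simp add: zero_power)
    then have "rep m 0" unfolding rep_def by simp
    moreover have "\<forall>f. annih f \<longrightarrow> f m = lin f 0" using True unfolding annih_def by simp
    ultimately show ?thesis by blast
  next
    case nz: False
    show ?thesis
    proof (cases "std m")
      case True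
      then have "rep m (Poly_Mapping.single m 1)" unfolding rep_def by (simp add: lin_def)
      then show ?thesis by (intro exI[of _ "Poly_Mapping.single m 1"]) simp
    next
      case ns: False
      have IH: "\<exists>cc. rep n cc \<and> (\<forall>f. annih f \<longrightarrow> f n = lin f cc)" if "wt n < wt m" for n
        using less that by blast
      consider "0 < lk m a1 \<and> 0 < lk m d1" | "0 < lk m b1 \<and> 0 < lk m d2" | "0 < lk m a2 \<and> 0 < lk m d2"
        | "0 < lk m a1 \<and> 0 < lk m d2" | "0 < lk m b1 \<and> 0 < lk m a3"
        using ns nz unfolding std_def by auto
      then show ?thesis
      proof cases
        case 1
        define m' where "m' = m - sv a1 - sv d1"
        have m: "m = m' + sv a1 + sv d1" unfolding m'_def using 1 by (intro split_mon) auto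
        show ?thesis
        proof (rule red_step[OF m])
          show "psi (m' + sv a1 + sv d1) = psi (m' + sv a2 + sv y) - psi (m' + sv z + sv b1)"
            using psi_rels(1)[of m'] by (simp add: algebra_simps)
          show "f (m' + sv a1 + sv d1) = f (m' + sv a2 + sv y) - f (m' + sv z + sv b1)" if "annih f" for f
            using that unfolding annih_def by (auto simp: algebra_simps)
          show "\<exists>cc. rep (m' + sv a2 + sv y) cc \<and> (\<forall>f. annih f \<longrightarrow> f (m' + sv a2 + sv y) = lin f cc)"
            by (rule IH) (simp add: m wt_add)
          show "\<exists>cc. rep (m' + sv z + sv b1) cc \<and> (\<forall>f. annih f \<longrightarrow> f (m' + sv z + sv b1) = lin f cc)"
            by (rule IH) (simp add: m wt_add)
        qed
      next
        case 2
        define m' where "m' = m - sv b1 - sv d2"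
        have m: "m = m' + sv b1 + sv d2" unfolding m'_def using 2 by (intro split_mon) auto
        show ?thesis
        proof (rule red_step[OF m])
          show "psi (m' + sv b1 + sv d2) = psi (m' + sv y + sv c) - psi (m' + sv d1 + sv b2)"
            using psi_rels(2)[of m'] by (simp add: algebra_simps)
          show "f (m' + sv b1 + sv d2) = f (m' + sv y + sv c) - f (m' + sv d1 + sv b2)" if "annih f" for f
            using that unfolding annih_def by (auto simp: algebra_simps)
          show "\<exists>cc. rep (m' + sv y + sv c) cc \<and> (\<forall>f. annih f \<longrightarrow> f (m' + sv y + sv c) = lin f cc)"
            by (rule IH) (simp add: m wt_add)
          show "\<exists>cc. rep (m' + sv d1 + sv b2) cc \<and> (\<forall>f. annih f \<longrightarrow> f (m' + sv d1 + sv b2) = lin f cc)"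
            by (rule IH) (simp add: m wt_add)
        qed
      next
        case 3
        define m' where "m' = m - sv a2 - sv d2"
        have m: "m = m' + sv a2 + sv d2" unfolding m'_def using 3 by (intro split_mon) auto
        show ?thesis
        proof (rule red_step[OF m])
          show "psi (m' + sv a2 + sv d2) = psi (m' + sv z + sv c) - psi (m' + sv d1 + sv a3)"
            using psi_rels(3)[of m'] by (simp add: algebra_simps)
          show "f (m' + sv a2 + sv d2) = f (m' + sv z + sv c) - f (m' + sv d1 + sv a3)" if "annih f" for f
            using that unfolding annih_def by (auto simp: algebra_simps)
          show "\<exists>cc. rep (m' + sv z + sv c) cc \<and> (\<forall>f. annih f \<longrightarrow> f (m' + sv z + sv c) = lin f cc)"
            by (rule IH) (simp add: m wt_add)
          show "\<exists>cc. rep (m' + sv d1 + sv a3) cc \<and> (\<forall>f. annih f \<longrightarrow> f (m' + sv d1 + sv a3) = lin f cc)"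
            by (rule IH) (simp add: m wt_add)
        qed
      next
        case 4
        define m' where "m' = m - sv a1 - sv d2"
        have m: "m = m' + sv a1 + sv d2" unfolding m'_def using 4 by (intro split_mon) auto
        show ?thesis
        proof (rule red_step[OF m])
          show "psi (m' + sv a1 + sv d2) = psi (m' + sv z + sv b2) - psi (m' + sv y + sv a3)"
            using psi_rels(4)[of m'] by (simp add: algebra_simps)
          show "f (m' + sv a1 + sv d2) = f (m' + sv z + sv b2) - f (m' + sv y + sv a3)" if "annih f" for f
            using that unfolding annih_def by (auto simp: algebra_simps)
          show "\<exists>cc. rep (m' + sv z + sv b2) cc \<and> (\<forall>f. annih f \<longrightarrow> f (m' + sv z + sv b2) = lin f cc)"
            by (rule IH) (simp add: m wt_add)
          show "\<exists>cc. rep (m' + sv y + sv a3) cc \<and> (\<forall>f. annih f \<longrightarrow> f (m' + sv y + sv a3) = lin f cc)"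
            by (rule IH) (simp add: m wt_add)
        qed
      next
        case 5
        define m' where "m' = m - sv b1 - sv a3"
        have m: "m = m' + sv b1 + sv a3" unfolding m'_def using 5 by (intro split_mon) auto
        show ?thesis
        proof (rule red_step[OF m])
          show "psi (m' + sv b1 + sv a3) = psi (m' + sv a2 + sv b2) - psi (m' + sv a1 + sv c)"
            using psi_rels(5)[of m'] by (simp add: algebra_simps)
          show "f (m' + sv b1 + sv a3) = f (m' + sv a2 + sv b2) - f (m' + sv a1 + sv c)" if "annih f" for f
            using that unfolding annih_def by (auto simp: algebra_simps)
          show "\<exists>cc. rep (m' + sv a2 + sv b2) cc \<and> (\<forall>f. annih f \<longrightarrow> f (m' + sv a2 + sv b2) = lin f cc)"
            by (rule IH) (simp add: m wt_add)
          show "\<exists>cc. rep (m' + sv a1 + sv c) cc \<and> (\<forall>f. annih f \<longrightarrow> f (m' + sv a1 + sv c) = lin f cc)"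
            by (rule IH) (simp add: m wt_add)
        qed
      qed
    qed
  qed
qed

end

lemma finite_lookup_le: "finite {m :: mon. \<forall>v. Poly_Mapping.lookup m v \<le> N}"
proof -
  have "Poly_Mapping.lookup ` {m :: mon. \<forall>v. Poly_Mapping.lookup m v \<le> N} \<subseteq> PiE UNIV (\<lambda>_. {..N})"
    by (auto simp: PiE_UNIV_domain)
  moreover have "finite (PiE (UNIV::var set) (\<lambda>_. {..N}))"
    by (rule finite_PiE) auto
  ultimately have "finite (Poly_Mapping.lookup ` {m :: mon. \<forall>v. Poly_Mapping.lookup m v \<le> N})"
    by (rule finite_subset)
  moreover have "inj (Poly_Mapping.lookup :: mon \<Rightarrow> var \<Rightarrow> nat)"
  proof (rule injI)
    fix x y :: mon assume "Poly_Mapping.lookup x = Poly_Mapping.lookup y"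
    then show "x = y" by (intro poly_mapping_eqI) simp
  qed
  ultimately show ?thesis
    by (meson finite_imageD inj_on_subset subset_UNIV)
qed

context roles begin

lemma finite_deg_le: "finite {m. deg m \<le> N}"
proof (rule finite_subset[OF _ finite_lookup_le[of N]])
  show "{m. deg m \<le> N} \<subseteq> {m. \<forall>v. lk m v \<le> N}"
  proof (clarsimp)
    fix m v assume "deg m \<le> N"
    moreover have "lk m v \<le> deg m" unfolding deg_def by (rule member_le_sum) auto
    ultimately show "lk m v \<le> N" by simp
  qed
qed

definition coord :: "mon \<Rightarrow> poly10" where
  "coord m = (THE cc. rep m cc)"

lemma rep_coord: "rep m (coord m)"
proof -
  obtain cc where "rep m cc" using reduction by blast
  then have "\<exists>!cc. rep m cc" using rep_unique by blast
  then show ?thesis unfolding coord_def by (rule theI')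
qed

lemma annih_coord: "annih f \<Longrightarrow> f m = lin f (coord m)"
proof -
  assume a: "annih f"
  obtain cc where cc: "rep m cc" "\<forall>f. annih f \<longrightarrow> f m = lin f cc" using reduction by blast
  then have "cc = coord m" using rep_unique rep_coord by blast
  then show ?thesis using cc a by simp
qed

lemma coord_std: "std w \<Longrightarrow> coord w = Poly_Mapping.single w 1"
proof -
  assume "std w"
  then have "rep w (Poly_Mapping.single w 1)" unfolding rep_def by (simp add: lin_def)
  then show ?thesis using rep_unique rep_coord by blast
qed

lemma coord_z: "0 < lk m z \<Longrightarrow> coord m = 0"
proof -
  assume "0 < lk m z"
  then have "psi m = 0" unfolding psi_def sgnc_def by (simp add: zero_power)
  then have "rep m 0" unfolding rep_def by simp
  then show ?thesis using rep_unique rep_coord by blast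
qed

lemma comb3:
  assumes "psi m1 - psi m2 + psi m3 = 0"
  shows "lin F (coord m1) - lin F (coord m2) + lin F (coord m3) = 0"
proof -
  let ?C = "coord m1 - coord m2 + coord m3"
  have "?C = 0"
  proof (rule indep)
    have "Poly_Mapping.keys ?C \<subseteq> Poly_Mapping.keys (coord m1) \<union> Poly_Mapping.keys (coord m2) \<union> Poly_Mapping.keys (coord m3)"
      using keys_add[of "coord m1 - coord m2" "coord m3"] keys_diff[of "coord m1" "coord m2"] by auto
    then show "Poly_Mapping.keys ?C \<subseteq> Collect std"
      using rep_coord[of m1] rep_coord[of m2] rep_coord[of m3] unfolding rep_def by auto
    show "lin (\<lambda>w. Poly_Mapping.lookup (psi w) u) ?C = 0" for u
    proof -
      have "Poly_Mapping.lookup (psi m1 - psi m2 + psi m3) u = 0" using assms by simp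
      then show ?thesis
        using rep_coord[of m1] rep_coord[of m2] rep_coord[of m3] unfolding rep_def
        by (simp add: lin_add lin_diff lookup_add lookup_minus)
    qed
  qed
  then have "lin F ?C = 0" by simp
  then show ?thesis by (simp add: lin_add lin_diff)
qed

definition g0 :: "(mon \<Rightarrow> complex) \<Rightarrow> mon \<Rightarrow> complex" where
  "g0 f w = (if 0 < lk w y then f (w - sv y) else 0)"

definition gg :: "(mon \<Rightarrow> complex) \<Rightarrow> mon \<Rightarrow> complex" where
  "gg f m = lin (g0 f) (coord m)"

lemma gg_annih: "annih (gg f)"
  unfolding annih_def gg_def
proof (intro conjI allI impI)
  fix m
  show "0 < lk m z \<Longrightarrow> lin (g0 f) (coord m) = 0" by (simp add: coord_z)
qed (rule comb3, rule psi_rels)+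

lemma std_add_y: "std w \<Longrightarrow> std (w + sv y)"
  unfolding std_def by (simp add: lookup_add)

lemma shift_eq: "(m + n) + sv u + sv v = (m + sv u + sv v) + n"
  by (metis add.assoc add.commute)

lemma annih_shift:
  assumes a: "annih F" and n: "lk n z = 0"
  shows "annih (\<lambda>m. F (m + n))"
proof -
  have z: "\<forall>m. 0 < lk m z \<longrightarrow> F m = 0"
    and r1: "\<forall>m. F (m + sv a1 + sv d1) - F (m + sv a2 + sv y) + F (m + sv z + sv b1) = 0"
    and r2: "\<forall>m. F (m + sv b1 + sv d2) - F (m + sv y + sv c) + F (m + sv d1 + sv b2) = 0"
    and r3: "\<forall>m. F (m + sv a2 + sv d2) - F (m + sv z + sv c) + F (m + sv d1 + sv a3) = 0"
    and r4: "\<forall>m. F (m + sv a1 + sv d2) - F (m + sv z + sv b2) + F (m + sv y + sv a3) = 0"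
    and r5: "\<forall>m. F (m + sv a1 + sv c) - F (m + sv a2 + sv b2) + F (m + sv b1 + sv a3) = 0"
    using a unfolding annih_def by blast+
  show ?thesis
    unfolding annih_def
  proof (intro conjI allI impI)
    fix m
    show "0 < lk m z \<Longrightarrow> F (m + n) = 0" using z n by (simp add: lookup_add)
    show "F (m + sv a1 + sv d1 + n) - F (m + sv a2 + sv y + n) + F (m + sv z + sv b1 + n) = 0"
      using spec[OF r1, of "m + n"] by (simp only: shift_eq)
    show "F (m + sv b1 + sv d2 + n) - F (m + sv y + sv c + n) + F (m + sv d1 + sv b2 + n) = 0"
      using spec[OF r2, of "m + n"] by (simp only: shift_eq)
    show "F (m + sv a2 + sv d2 + n) - F (m + sv z + sv c + n) + F (m + sv d1 + sv a3 + n) = 0"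
      using spec[OF r3, of "m + n"] by (simp only: shift_eq)
    show "F (m + sv a1 + sv d2 + n) - F (m + sv z + sv b2 + n) + F (m + sv y + sv a3 + n) = 0"
      using spec[OF r4, of "m + n"] by (simp only: shift_eq)
    show "F (m + sv a1 + sv c + n) - F (m + sv a2 + sv b2 + n) + F (m + sv b1 + sv a3 + n) = 0"
      using spec[OF r5, of "m + n"] by (simp only: shift_eq)
  qed
qed

lemma gg_shift:
  assumes a: "annih f"
  shows "gg f (m + sv y) = f m"
proof -
  define h where "h m = gg f (m + sv y)" for m
  have ah: "annih h"
    unfolding h_def by (rule annih_shift[OF gg_annih]) simp
  have "h m = lin h (coord m)" by (rule annih_coord[OF ah])
  also have "\<dots> = lin f (coord m)"
  proof (rule lin_cong)
    fix w assume "w \<in> Poly_Mapping.keys (coord m)"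
    then have "std w" using rep_coord[of m] unfolding rep_def by auto
    then have "coord (w + sv y) = Poly_Mapping.single (w + sv y) 1" by (simp add: coord_std std_add_y)
    then show "h w = f w" unfolding h_def gg_def g0_def by (simp add: lookup_add)
  qed
  also have "\<dots> = f m" using annih_coord[OF a] by simp
  finally show ?thesis unfolding h_def .
qed

lemma gg_deg:
  assumes D: "\<And>m. f m \<noteq> 0 \<Longrightarrow> deg m \<le> D" and nz: "gg f m \<noteq> 0"
  shows "deg m \<le> D + 1"
proof -
  obtain w where w: "w \<in> Poly_Mapping.keys (coord m)" "g0 f w \<noteq> 0"
  proof (rule ccontr)
    assume "\<not> thesis"
    with that have "\<forall>w\<in>Poly_Mapping.keys (coord m). g0 f w = 0" by blast
    then have "gg f m = 0" unfolding gg_def lin_def by simp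
    then show False using nz by simp
  qed
  then have wy: "0 < lk w y" and fw: "f (w - sv y) \<noteq> 0" unfolding g0_def by (auto split: if_splits)
  have "w = (w - sv y) + sv y" using wy by (intro poly_mapping_eqI) (auto simp: lookup_add lookup_minus)
  then have "deg w = deg (w - sv y) + 1" by (metis deg_add deg_sv)
  moreover have "deg (w - sv y) \<le> D" using D fw by simp
  moreover have "deg w = deg m" using w rep_coord[of m] unfolding rep_def by auto
  ultimately show ?thesis by simp
qed

definition G1 :: "poly10 \<Rightarrow> poly10" where "G1 P = pd a1 (pd d1 P) - pd a2 (pd y P) + pd z (pd b1 P)"
definition G2 :: "poly10 \<Rightarrow> poly10" where "G2 P = pd b1 (pd d2 P) - pd y (pd c P) + pd d1 (pd b2 P)"
definition G3 :: "poly10 \<Rightarrow> poly10" where "G3 P = pd a2 (pd d2 P) - pd z (pd c P) + pd d1 (pd a3 P)"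
definition G4 :: "poly10 \<Rightarrow> poly10" where "G4 P = pd a1 (pd d2 P) - pd z (pd b2 P) + pd y (pd a3 P)"
definition G5 :: "poly10 \<Rightarrow> poly10" where "G5 P = pd a1 (pd c P) - pd a2 (pd b2 P) + pd b1 (pd a3 P)"

lemma G_lookup:
  "mfact m * Poly_Mapping.lookup (G1 P) m = fP P (m + sv a1 + sv d1) - fP P (m + sv a2 + sv y) + fP P (m + sv z + sv b1)"
  "mfact m * Poly_Mapping.lookup (G2 P) m = fP P (m + sv b1 + sv d2) - fP P (m + sv y + sv c) + fP P (m + sv d1 + sv b2)"
  "mfact m * Poly_Mapping.lookup (G3 P) m = fP P (m + sv a2 + sv d2) - fP P (m + sv z + sv c) + fP P (m + sv d1 + sv a3)"
  "mfact m * Poly_Mapping.lookup (G4 P) m = fP P (m + sv a1 + sv d2) - fP P (m + sv z + sv b2) + fP P (m + sv y + sv a3)"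
  "mfact m * Poly_Mapping.lookup (G5 P) m = fP P (m + sv a1 + sv c) - fP P (m + sv a2 + sv b2) + fP P (m + sv b1 + sv a3)"
  unfolding G1_def G2_def G3_def G4_def G5_def
  by (simp_all add: lookup_add lookup_minus distrib_left right_diff_distrib fP_pd2)

lemma zero_iff_mf: "Q = 0 \<longleftrightarrow> (\<forall>m. mfact m * Poly_Mapping.lookup Q m = 0)"
proof
  assume "\<forall>m. mfact m * Poly_Mapping.lookup Q m = 0"
  then have "\<forall>m. Poly_Mapping.lookup Q m = 0" using mfact_nz by simp
  then show "Q = 0" by (intro poly_mapping_eqI) simp
qed simp

lemma G_zero_iff:
  "G1 P = 0 \<longleftrightarrow> (\<forall>m. fP P (m + sv a1 + sv d1) - fP P (m + sv a2 + sv y) + fP P (m + sv z + sv b1) = 0)"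
  "G2 P = 0 \<longleftrightarrow> (\<forall>m. fP P (m + sv b1 + sv d2) - fP P (m + sv y + sv c) + fP P (m + sv d1 + sv b2) = 0)"
  "G3 P = 0 \<longleftrightarrow> (\<forall>m. fP P (m + sv a2 + sv d2) - fP P (m + sv z + sv c) + fP P (m + sv d1 + sv a3) = 0)"
  "G4 P = 0 \<longleftrightarrow> (\<forall>m. fP P (m + sv a1 + sv d2) - fP P (m + sv z + sv b2) + fP P (m + sv y + sv a3) = 0)"
  "G5 P = 0 \<longleftrightarrow> (\<forall>m. fP P (m + sv a1 + sv c) - fP P (m + sv a2 + sv b2) + fP P (m + sv b1 + sv a3) = 0)"
  by (simp_all only: zero_iff_mf G_lookup)

lemma core:
  assumes iz: "indep_of z P" and h: "G1 P = 0" "G2 P = 0" "G3 P = 0" "G4 P = 0" "G5 P = 0"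
  shows "\<exists>Q. indep_of z Q \<and> pd y Q = P \<and> G1 Q = 0 \<and> G2 Q = 0 \<and> G3 Q = 0 \<and> G4 Q = 0 \<and> G5 Q = 0"
proof -
  define f where "f = fP P"
  have af: "annih f"
    unfolding annih_def f_def
  proof (intro conjI)
    show "\<forall>m. 0 < lk m z \<longrightarrow> fP P m = 0"
      using iz unfolding indep_of_def fP_def by (auto simp: in_keys_iff)
  qed (use h in \<open>simp_all add: G_zero_iff\<close>)
  define D where "D = Max (insert 0 (deg ` Poly_Mapping.keys P))"
  have Dle: "deg m \<le> D" if "f m \<noteq> 0" for m
  proof -
    have "m \<in> Poly_Mapping.keys P" using that unfolding f_def fP_def by (auto simp: in_keys_iff)
    then show ?thesis unfolding D_def by (intro Max_ge) auto
  qed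
  define g where "g = gg f"
  have ag: "annih g" unfolding g_def by (rule gg_annih)
  have gs: "g (m + sv y) = f m" for m unfolding g_def by (rule gg_shift[OF af])
  have gd: "deg m \<le> D + 1" if "g m \<noteq> 0" for m
    using gg_deg[of f D m] Dle that unfolding g_def by blast
  have finQ: "finite {m. g m / mfact m \<noteq> 0}"
    by (rule finite_subset[OF _ finite_deg_le[of "D+1"]]) (use gd in auto)
  define Q where "Q = Abs_poly_mapping (\<lambda>m. g m / mfact m)"
  have lQ: "Poly_Mapping.lookup Q m = g m / mfact m" for m
    unfolding Q_def using finQ by simp
  have fQ: "fP Q m = g m" for m
    unfolding fP_def lQ using mfact_nz by simp
  have "indep_of z Q"
    unfolding indep_of_def
  proof
    fix m assume "m \<in> Poly_Mapping.keys Q"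
    then have "g m \<noteq> 0" by (simp add: in_keys_iff lQ)
    then show "lk m z = 0" using ag unfolding annih_def by auto
  qed
  moreover have "pd y Q = P"
  proof (rule poly_mapping_eqI)
    fix m
    have "mfact m * Poly_Mapping.lookup (pd y Q) m = fP Q (m + sv y)" by (rule fP_pd1)
    also have "\<dots> = g (m + sv y)" by (rule fQ)
    also have "\<dots> = f m" by (rule gs)
    also have "\<dots> = mfact m * Poly_Mapping.lookup P m" by (simp add: f_def fP_def)
    finally have "mfact m * Poly_Mapping.lookup (pd y Q) m = mfact m * Poly_Mapping.lookup P m" .
    then show "Poly_Mapping.lookup (pd y Q) m = Poly_Mapping.lookup P m" using mfact_nz by simp
  qed
  moreover have "G1 Q = 0 \<and> G2 Q = 0 \<and> G3 Q = 0 \<and> G4 Q = 0 \<and> G5 Q = 0"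
    unfolding G_zero_iff fQ using ag unfolding annih_def by blast
  ultimately show ?thesis by blast
qed

end

definition sgnN :: "var set \<Rightarrow> mon \<Rightarrow> complex" where
  "sgnN N m = (-1) ^ (\<Sum>v\<in>N. Poly_Mapping.lookup m v)"

lift_definition sflip :: "var set \<Rightarrow> poly10 \<Rightarrow> poly10" is "\<lambda>N p m. sgnN N m * p m"
  by (auto elim: finite_subset[rotated])

lemma lookup_sflip: "Poly_Mapping.lookup (sflip N P) m = sgnN N m * Poly_Mapping.lookup P m"
  by (simp add: sflip.rep_eq)

lemma sgnN_sq: "sgnN N m * sgnN N m = 1"
  unfolding sgnN_def by (simp add: power_add[symmetric])

lemma sgnN_nz: "sgnN N m \<noteq> 0"
  unfolding sgnN_def by simp

lemma sgnN_add: "sgnN N (m + sv v) = (if v \<in> N then - sgnN N m else sgnN N m)"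
proof -
  have "(\<Sum>w\<in>N. Poly_Mapping.lookup (m + sv v) w) = (\<Sum>w\<in>N. Poly_Mapping.lookup m w) + (\<Sum>w\<in>N. if v = w then 1 else 0)"
    by (simp add: lookup_add sum.distrib)
  also have "(\<Sum>w\<in>N. if v = w then 1 else (0::nat)) = (if v \<in> N then 1 else 0)"
    by (simp add: sum.delta)
  finally show ?thesis unfolding sgnN_def by (auto simp: power_add)
qed

lemma sflip_sflip [simp]: "sflip N (sflip N P) = P"
  by (rule poly_mapping_eqI) (simp add: lookup_sflip mult.assoc[symmetric] sgnN_sq)

lemma sflip_add: "sflip N (P + Q) = sflip N P + sflip N Q"
  by (rule poly_mapping_eqI) (simp add: lookup_sflip lookup_add distrib_left)

lemma sflip_diff: "sflip N (P - Q) = sflip N P - sflip N Q"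
  by (rule poly_mapping_eqI) (simp add: lookup_sflip lookup_minus right_diff_distrib)

lemma sflip_uminus: "sflip N (- P) = - sflip N P"
  by (rule poly_mapping_eqI) (simp add: lookup_sflip)

lemma sflip_eq_0: "sflip N P = 0 \<longleftrightarrow> P = 0"
  by (metis sflip_sflip poly_mapping_eqI lookup_sflip lookup_zero mult_zero_right)

lemma keys_sflip: "Poly_Mapping.keys (sflip N P) = Poly_Mapping.keys P"
  by (auto simp: in_keys_iff lookup_sflip sgnN_nz)

lemma indep_sflip: "indep_of v (sflip N P) = indep_of v P"
  unfolding indep_of_def keys_sflip ..

lemma pd_sflip: "pd v (sflip N P) = (if v \<in> N then - sflip N (pd v P) else sflip N (pd v P))"
  by (rule poly_mapping_eqI) (simp add: lookup_pd lookup_sflip sgnN_add)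

lemma pd_add: "pd v (P + Q) = pd v P + pd v Q"
  by (rule poly_mapping_eqI) (simp add: lookup_pd lookup_add distrib_left)

lemma pd_diff: "pd v (P - Q) = pd v P - pd v Q"
  by (rule poly_mapping_eqI) (simp add: lookup_pd lookup_minus right_diff_distrib)

lemma pd_uminus: "pd v (- P) = - pd v P"
  by (rule poly_mapping_eqI) (simp add: lookup_pd)

lemma pd_comm: "pd u (pd v P) = pd v (pd u P)"
proof (cases "u = v")
  case False
  then show ?thesis
    by (intro poly_mapping_eqI) (simp add: lookup_pd lookup_add ac_simps)
qed simp

context roles begin

lemma bridge:
  assumes H: "\<And>P. (opD P = 0 \<and> opD1 P = 0 \<and> opD2 P = 0 \<and> opD3 P = 0 \<and> opD4 P = 0) \<longleftrightarrow>
      (G1 (sflip N P) = 0 \<and> G2 (sflip N P) = 0 \<and> G3 (sflip N P) = 0 \<and> G4 (sflip N P) = 0 \<and> G5 (sflip N P) = 0)"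
    and yN: "y \<notin> N"
    and iz: "indep_of z P"
    and h: "opD P = 0" "opD1 P = 0" "opD2 P = 0" "opD3 P = 0" "opD4 P = 0"
  shows "\<exists>Q. indep_of z Q \<and> pd y Q = P \<and> opD Q = 0 \<and> opD1 Q = 0 \<and> opD2 Q = 0 \<and> opD3 Q = 0 \<and> opD4 Q = 0"
proof -
  have "G1 (sflip N P) = 0 \<and> G2 (sflip N P) = 0 \<and> G3 (sflip N P) = 0 \<and> G4 (sflip N P) = 0 \<and> G5 (sflip N P) = 0"
    using H h by blast
  moreover have "indep_of z (sflip N P)" using iz by (simp add: indep_sflip)
  ultimately obtain Q' where Q': "indep_of z Q'" "pd y Q' = sflip N P"
      "G1 Q' = 0" "G2 Q' = 0" "G3 Q' = 0" "G4 Q' = 0" "G5 Q' = 0"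
    using core by blast
  define Q where "Q = sflip N Q'"
  have "indep_of z Q" unfolding Q_def using Q' by (simp add: indep_sflip)
  moreover have "pd y Q = P" unfolding Q_def using yN Q' by (simp add: pd_sflip)
  moreover have "opD Q = 0 \<and> opD1 Q = 0 \<and> opD2 Q = 0 \<and> opD3 Q = 0 \<and> opD4 Q = 0"
    using H[of Q] Q' unfolding Q_def by simp
  ultimately show ?thesis by blast
qed

end

lemma main12:
  assumes "indep_of X14 P"
    and "opD P = 0" "opD1 P = 0" "opD2 P = 0" "opD3 P = 0" "opD4 P = 0"
  shows "\<exists>Q. indep_of X14 Q \<and> pd X24 Q = P \<and> opD Q = 0 \<and> opD1 Q = 0 \<and> opD2 Q = 0 \<and> opD3 Q = 0 \<and> opD4 Q = 0"
proof -
  interpret r: roles X24 X14 X12 X13 X1 X23 X2 X3 X34 X4 by unfold_locales simp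
  have e1: "r.G1 (sflip {} P') = sflip {} (opD P')" for P'
    unfolding r.G1_def opD_def
    by (simp add: pd_sflip pd_uminus sflip_add sflip_diff sflip_uminus pd_comm algebra_simps)
  have e2: "r.G2 (sflip {} P') = sflip {} (opD1 P')" for P'
    unfolding r.G2_def opD1_def
    by (simp add: pd_sflip pd_uminus sflip_add sflip_diff sflip_uminus pd_comm algebra_simps)
  have e3: "r.G3 (sflip {} P') = sflip {} (opD2 P')" for P'
    unfolding r.G3_def opD2_def
    by (simp add: pd_sflip pd_uminus sflip_add sflip_diff sflip_uminus pd_comm algebra_simps)
  have e4: "r.G4 (sflip {} P') = sflip {} (opD3 P')" for P'
    unfolding r.G4_def opD3_def
    by (simp add: pd_sflip pd_uminus sflip_add sflip_diff sflip_uminus pd_comm algebra_simps)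
  have e5: "r.G5 (sflip {} P') = sflip {} (opD4 P')" for P'
    unfolding r.G5_def opD4_def
    by (simp add: pd_sflip pd_uminus sflip_add sflip_diff sflip_uminus pd_comm algebra_simps)
  have H: "(opD P' = 0 \<and> opD1 P' = 0 \<and> opD2 P' = 0 \<and> opD3 P' = 0 \<and> opD4 P' = 0) \<longleftrightarrow>
      (r.G1 (sflip {} P') = 0 \<and> r.G2 (sflip {} P') = 0 \<and> r.G3 (sflip {} P') = 0 \<and> r.G4 (sflip {} P') = 0 \<and> r.G5 (sflip {} P') = 0)" for P'
    unfolding e1 e2 e3 e4 e5 by (auto simp: sflip_eq_0)
  show ?thesis by (rule r.bridge[OF H]) (use assms in simp_all)
qed

lemma main13:
  assumes "indep_of X14 P"
    and "opD P = 0" "opD1 P = 0" "opD2 P = 0" "opD3 P = 0" "opD4 P = 0"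
  shows "\<exists>Q. indep_of X14 Q \<and> pd X34 Q = P \<and> opD Q = 0 \<and> opD1 Q = 0 \<and> opD2 Q = 0 \<and> opD3 Q = 0 \<and> opD4 Q = 0"
proof -
  interpret r: roles X34 X14 X13 X12 X1 X23 X3 X2 X24 X4 by unfold_locales simp
  have e1: "r.G1 (sflip {X23} P') = - sflip {X23} (opD P')" for P'
    unfolding r.G1_def opD_def
    by (simp add: pd_sflip pd_uminus sflip_add sflip_diff sflip_uminus pd_comm algebra_simps)
  have e2: "r.G2 (sflip {X23} P') = - sflip {X23} (opD1 P')" for P'
    unfolding r.G2_def opD1_def
    by (simp add: pd_sflip pd_uminus sflip_add sflip_diff sflip_uminus pd_comm algebra_simps)
  have e3: "r.G3 (sflip {X23} P') = sflip {X23} (opD3 P')" for P'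
    unfolding r.G3_def opD3_def
    by (simp add: pd_sflip pd_uminus sflip_add sflip_diff sflip_uminus pd_comm algebra_simps)
  have e4: "r.G4 (sflip {X23} P') = sflip {X23} (opD2 P')" for P'
    unfolding r.G4_def opD2_def
    by (simp add: pd_sflip pd_uminus sflip_add sflip_diff sflip_uminus pd_comm algebra_simps)
  have e5: "r.G5 (sflip {X23} P') = - sflip {X23} (opD4 P')" for P'
    unfolding r.G5_def opD4_def
    by (simp add: pd_sflip pd_uminus sflip_add sflip_diff sflip_uminus pd_comm algebra_simps)
  have H: "(opD P' = 0 \<and> opD1 P' = 0 \<and> opD2 P' = 0 \<and> opD3 P' = 0 \<and> opD4 P' = 0) \<longleftrightarrow>
      (r.G1 (sflip {X23} P') = 0 \<and> r.G2 (sflip {X23} P') = 0 \<and> r.G3 (sflip {X23} P') = 0 \<and> r.G4 (sflip {X23} P') = 0 \<and> r.G5 (sflip {X23} P') = 0)" for P'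
    unfolding e1 e2 e3 e4 e5 by (auto simp: sflip_eq_0)
  show ?thesis by (rule r.bridge[OF H]) (use assms in simp_all)
qed

lemma main21:
  assumes "indep_of X24 P"
    and "opD P = 0" "opD1 P = 0" "opD2 P = 0" "opD3 P = 0" "opD4 P = 0"
  shows "\<exists>Q. indep_of X24 Q \<and> pd X14 Q = P \<and> opD Q = 0 \<and> opD1 Q = 0 \<and> opD2 Q = 0 \<and> opD3 Q = 0 \<and> opD4 Q = 0"
proof -
  interpret r: roles X14 X24 X12 X23 X2 X13 X1 X3 X34 X4 by unfold_locales simp
  have e1: "r.G1 (sflip {X12} P') = - sflip {X12} (opD P')" for P'
    unfolding r.G1_def opD_def
    by (simp add: pd_sflip pd_uminus sflip_add sflip_diff sflip_uminus pd_comm algebra_simps)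
  have e2: "r.G2 (sflip {X12} P') = sflip {X12} (opD2 P')" for P'
    unfolding r.G2_def opD2_def
    by (simp add: pd_sflip pd_uminus sflip_add sflip_diff sflip_uminus pd_comm algebra_simps)
  have e3: "r.G3 (sflip {X12} P') = sflip {X12} (opD1 P')" for P'
    unfolding r.G3_def opD1_def
    by (simp add: pd_sflip pd_uminus sflip_add sflip_diff sflip_uminus pd_comm algebra_simps)
  have e4: "r.G4 (sflip {X12} P') = - sflip {X12} (opD3 P')" for P'
    unfolding r.G4_def opD3_def
    by (simp add: pd_sflip pd_uminus sflip_add sflip_diff sflip_uminus pd_comm algebra_simps)
  have e5: "r.G5 (sflip {X12} P') = - sflip {X12} (opD4 P')" for P'
    unfolding r.G5_def opD4_def
    by (simp add: pd_sflip pd_uminus sflip_add sflip_diff sflip_uminus pd_comm algebra_simps)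
  have H: "(opD P' = 0 \<and> opD1 P' = 0 \<and> opD2 P' = 0 \<and> opD3 P' = 0 \<and> opD4 P' = 0) \<longleftrightarrow>
      (r.G1 (sflip {X12} P') = 0 \<and> r.G2 (sflip {X12} P') = 0 \<and> r.G3 (sflip {X12} P') = 0 \<and> r.G4 (sflip {X12} P') = 0 \<and> r.G5 (sflip {X12} P') = 0)" for P'
    unfolding e1 e2 e3 e4 e5 by (auto simp: sflip_eq_0)
  show ?thesis by (rule r.bridge[OF H]) (use assms in simp_all)
qed

lemma main23:
  assumes "indep_of X24 P"
    and "opD P = 0" "opD1 P = 0" "opD2 P = 0" "opD3 P = 0" "opD4 P = 0"
  shows "\<exists>Q. indep_of X24 Q \<and> pd X34 Q = P \<and> opD Q = 0 \<and> opD1 Q = 0 \<and> opD2 Q = 0 \<and> opD3 Q = 0 \<and> opD4 Q = 0"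
proof -
  interpret r: roles X34 X24 X23 X12 X2 X13 X3 X1 X14 X4 by unfold_locales simp
  have e1: "r.G1 (sflip {X12, X13} P') = sflip {X12, X13} (opD P')" for P'
    unfolding r.G1_def opD_def
    by (simp add: pd_sflip pd_uminus sflip_add sflip_diff sflip_uminus pd_comm algebra_simps)
  have e2: "r.G2 (sflip {X12, X13} P') = - sflip {X12, X13} (opD2 P')" for P'
    unfolding r.G2_def opD2_def
    by (simp add: pd_sflip pd_uminus sflip_add sflip_diff sflip_uminus pd_comm algebra_simps)
  have e3: "r.G3 (sflip {X12, X13} P') = - sflip {X12, X13} (opD3 P')" for P'
    unfolding r.G3_def opD3_def
    by (simp add: pd_sflip pd_uminus sflip_add sflip_diff sflip_uminus pd_comm algebra_simps)
  have e4: "r.G4 (sflip {X12, X13} P') = sflip {X12, X13} (opD1 P')" for P'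
    unfolding r.G4_def opD1_def
    by (simp add: pd_sflip pd_uminus sflip_add sflip_diff sflip_uminus pd_comm algebra_simps)
  have e5: "r.G5 (sflip {X12, X13} P') = sflip {X12, X13} (opD4 P')" for P'
    unfolding r.G5_def opD4_def
    by (simp add: pd_sflip pd_uminus sflip_add sflip_diff sflip_uminus pd_comm algebra_simps)
  have H: "(opD P' = 0 \<and> opD1 P' = 0 \<and> opD2 P' = 0 \<and> opD3 P' = 0 \<and> opD4 P' = 0) \<longleftrightarrow>
      (r.G1 (sflip {X12, X13} P') = 0 \<and> r.G2 (sflip {X12, X13} P') = 0 \<and> r.G3 (sflip {X12, X13} P') = 0 \<and> r.G4 (sflip {X12, X13} P') = 0 \<and> r.G5 (sflip {X12, X13} P') = 0)" for P'
    unfolding e1 e2 e3 e4 e5 by (auto simp: sflip_eq_0)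
  show ?thesis by (rule r.bridge[OF H]) (use assms in simp_all)
qed

lemma main31:
  assumes "indep_of X34 P"
    and "opD P = 0" "opD1 P = 0" "opD2 P = 0" "opD3 P = 0" "opD4 P = 0"
  shows "\<exists>Q. indep_of X34 Q \<and> pd X14 Q = P \<and> opD Q = 0 \<and> opD1 Q = 0 \<and> opD2 Q = 0 \<and> opD3 Q = 0 \<and> opD4 Q = 0"
proof -
  interpret r: roles X14 X34 X13 X23 X3 X12 X1 X2 X24 X4 by unfold_locales simp
  have e1: "r.G1 (sflip {X13, X23} P') = sflip {X13, X23} (opD P')" for P'
    unfolding r.G1_def opD_def
    by (simp add: pd_sflip pd_uminus sflip_add sflip_diff sflip_uminus pd_comm algebra_simps)
  have e2: "r.G2 (sflip {X13, X23} P') = sflip {X13, X23} (opD3 P')" for P'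
    unfolding r.G2_def opD3_def
    by (simp add: pd_sflip pd_uminus sflip_add sflip_diff sflip_uminus pd_comm algebra_simps)
  have e3: "r.G3 (sflip {X13, X23} P') = - sflip {X13, X23} (opD1 P')" for P'
    unfolding r.G3_def opD1_def
    by (simp add: pd_sflip pd_uminus sflip_add sflip_diff sflip_uminus pd_comm algebra_simps)
  have e4: "r.G4 (sflip {X13, X23} P') = - sflip {X13, X23} (opD2 P')" for P'
    unfolding r.G4_def opD2_def
    by (simp add: pd_sflip pd_uminus sflip_add sflip_diff sflip_uminus pd_comm algebra_simps)
  have e5: "r.G5 (sflip {X13, X23} P') = sflip {X13, X23} (opD4 P')" for P'
    unfolding r.G5_def opD4_def
    by (simp add: pd_sflip pd_uminus sflip_add sflip_diff sflip_uminus pd_comm algebra_simps)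
  have H: "(opD P' = 0 \<and> opD1 P' = 0 \<and> opD2 P' = 0 \<and> opD3 P' = 0 \<and> opD4 P' = 0) \<longleftrightarrow>
      (r.G1 (sflip {X13, X23} P') = 0 \<and> r.G2 (sflip {X13, X23} P') = 0 \<and> r.G3 (sflip {X13, X23} P') = 0 \<and> r.G4 (sflip {X13, X23} P') = 0 \<and> r.G5 (sflip {X13, X23} P') = 0)" for P'
    unfolding e1 e2 e3 e4 e5 by (auto simp: sflip_eq_0)
  show ?thesis by (rule r.bridge[OF H]) (use assms in simp_all)
qed

lemma main32:
  assumes "indep_of X34 P"
    and "opD P = 0" "opD1 P = 0" "opD2 P = 0" "opD3 P = 0" "opD4 P = 0"
  shows "\<exists>Q. indep_of X34 Q \<and> pd X24 Q = P \<and> opD Q = 0 \<and> opD1 Q = 0 \<and> opD2 Q = 0 \<and> opD3 Q = 0 \<and> opD4 Q = 0"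
proof -
  interpret r: roles X24 X34 X23 X13 X3 X12 X2 X1 X14 X4 by unfold_locales simp
  have e1: "r.G1 (sflip {X23, X13, X12} P') = - sflip {X23, X13, X12} (opD P')" for P'
    unfolding r.G1_def opD_def
    by (simp add: pd_sflip pd_uminus sflip_add sflip_diff sflip_uminus pd_comm algebra_simps)
  have e2: "r.G2 (sflip {X23, X13, X12} P') = - sflip {X23, X13, X12} (opD3 P')" for P'
    unfolding r.G2_def opD3_def
    by (simp add: pd_sflip pd_uminus sflip_add sflip_diff sflip_uminus pd_comm algebra_simps)
  have e3: "r.G3 (sflip {X23, X13, X12} P') = - sflip {X23, X13, X12} (opD2 P')" for P'
    unfolding r.G3_def opD2_def
    by (simp add: pd_sflip pd_uminus sflip_add sflip_diff sflip_uminus pd_comm algebra_simps)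
  have e4: "r.G4 (sflip {X23, X13, X12} P') = - sflip {X23, X13, X12} (opD1 P')" for P'
    unfolding r.G4_def opD1_def
    by (simp add: pd_sflip pd_uminus sflip_add sflip_diff sflip_uminus pd_comm algebra_simps)
  have e5: "r.G5 (sflip {X23, X13, X12} P') = - sflip {X23, X13, X12} (opD4 P')" for P'
    unfolding r.G5_def opD4_def
    by (simp add: pd_sflip pd_uminus sflip_add sflip_diff sflip_uminus pd_comm algebra_simps)
  have H: "(opD P' = 0 \<and> opD1 P' = 0 \<and> opD2 P' = 0 \<and> opD3 P' = 0 \<and> opD4 P' = 0) \<longleftrightarrow>
      (r.G1 (sflip {X23, X13, X12} P') = 0 \<and> r.G2 (sflip {X23, X13, X12} P') = 0 \<and> r.G3 (sflip {X23, X13, X12} P') = 0 \<and> r.G4 (sflip {X23, X13, X12} P') = 0 \<and> r.G5 (sflip {X23, X13, X12} P') = 0)" for P'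
    unfolding e1 e2 e3 e4 e5 by (auto simp: sflip_eq_0)
  show ?thesis by (rule r.bridge[OF H]) (use assms in simp_all)
qed

theorem mainTheorem8:
  fixes a b :: nat and P :: poly10
  assumes "a \<in> {1, 2, 3}" and "b \<in> {1, 2, 3}" and "a \<noteq> b"
    and "indep_of (x_4 a) P"
    and "opD P = 0" and "opD1 P = 0" and "opD2 P = 0" and "opD3 P = 0" and "opD4 P = 0"
  shows "\<exists>Q :: poly10. indep_of (x_4 a) Q \<and> pd (x_4 b) Q = P
           \<and> opD Q = 0 \<and> opD1 Q = 0 \<and> opD2 Q = 0 \<and> opD3 Q = 0 \<and> opD4 Q = 0"
proof -
  have x1: "x_4 1 = X14" by (simp add: One_nat_def)
  have x2: "x_4 2 = X24" by (simp add: numeral_2_eq_2)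
  have x3: "x_4 3 = X34" by (simp add: numeral_3_eq_3)
  from assms(1-3) have "(a=1 \<and> b=2) \<or> (a=1 \<and> b=3) \<or> (a=2 \<and> b=1) \<or> (a=2 \<and> b=3) \<or> (a=3 \<and> b=1) \<or> (a=3 \<and> b=2)"
    by auto
  then show ?thesis
  proof (elim disjE conjE)
    assume "a = 1" "b = 2" then show ?thesis using main12[of P] assms(4-9) x1 x2 by simp
  next
    assume "a = 1" "b = 3" then show ?thesis using main13[of P] assms(4-9) x1 x3 by simp
  next
    assume "a = 2" "b = 1" then show ?thesis using main21[of P] assms(4-9) x1 x2 by simp
  next
    assume "a = 2" "b = 3" then show ?thesis using main23[of P] assms(4-9) x2 x3 by simp
  next
    assume "a = 3" "b = 1" then show ?thesis using main31[of P] assms(4-9) x1 x3 by simp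
  next
    assume "a = 3" "b = 2" then show ?thesis using main32[of P] assms(4-9) x2 x3 by simp
  qed
qed

end
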